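(* Let $\alpha_1,\dots,\alpha_n\in\mathbb{Z}^{n-1}$ be weights of a representation of $T^{n-1}$ on $\mathbb{C}^n$ in general position (every $n-1$ of them linearly independent). For $i=1,\dots,n$ let $\tilde c_i=(-1)^i\det(\alpha_1,\dots,\widehat{\alpha_i},\dots,\alpha_n)\in\mathbb{Z}$ (nonzero), $c_{\gcd}=\gcd(\tilde c_1,\dots,\tilde c_n)$ and $c_i=\tilde c_i/c_{\gcd}$. Let $G=T^n$ act on $\mathbb{C}^n$ by $(t_1,\dots,t_n)\cdot(z_1,\dots,z_n)=(t_1z_1,\dots,t_nz_n)$ and let $T'=\{t\in G\mid t_1^{c_1}\cdots t_n^{c_n}=1\}$ act by restriction. Then this action of $T'$ on $\mathbb{C}^n$ is strictly appropriate (all its stabilizer subgroups are connected) if and only if $c_i=\pm1$ for all $i$, i.e. if and only if all $\tilde c_i$ coincide up to sign.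
   Context: The orbit space of the original representation coincides with that of $T'$ acting on $\mathbb{C}^n$. For this linear action the fixed point set is the origin and the adjoining condition holds, so "strictly appropriate" amounts to the requirement that every stabilizer subgroup of $T'$ be a torus (have no finite components). *)

theory Defs
  imports "HOL-Analysis.Analysis"
begin

text \<open>Indices are 0-based: the weights are alpha 0, ..., alpha (n-1), the
  paper's alpha_i being our alpha (i-1). A weight alpha k in Z^(n-1) is the function
  r \<mapsto> alpha k r, r < n-1. Points of C^n and of T^n are functions nat \<Rightarrow> complex
  (coordinates i < n), with coordinates i \<ge> n fixed (0 for points of C^n, 1 for torus
  elements), so that the product topology on nat \<Rightarrow> complex restricts to the usual one.\<close>

definition detn :: "nat \<Rightarrow> (nat \<Rightarrow> nat \<Rightarrow> int) \<Rightarrow> int" where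
  "detn m M = (\<Sum>p | p permutes {..<m}. sign p * (\<Prod>i<m. M i (p i)))"

definition skip :: "nat \<Rightarrow> nat \<Rightarrow> nat" where
  "skip k j = (if j < k then j else Suc j)"

definition general_position :: "nat \<Rightarrow> (nat \<Rightarrow> nat \<Rightarrow> int) \<Rightarrow> bool" where
  "general_position n alpha \<longleftrightarrow>
     (\<forall>k<n. \<forall>a::nat \<Rightarrow> int.
        (\<forall>r<n-1. (\<Sum>i\<in>{..<n}-{k}. a i * alpha i r) = 0) \<longrightarrow> (\<forall>i\<in>{..<n}-{k}. a i = 0))"

text \<open>c~_i = (-1)^i det(alpha_1,..,alpha_i hat,..,alpha_n); with 0-based k = i-1.\<close>
definition ctilde :: "nat \<Rightarrow> (nat \<Rightarrow> nat \<Rightarrow> int) \<Rightarrow> nat \<Rightarrow> int" where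
  "ctilde n alpha k = (-1) ^ (Suc k) * detn (n-1) (\<lambda>r j. alpha (skip k j) r)"

definition cgcd :: "nat \<Rightarrow> (nat \<Rightarrow> nat \<Rightarrow> int) \<Rightarrow> int" where
  "cgcd n alpha = Gcd (ctilde n alpha ` {..<n})"

definition cc :: "nat \<Rightarrow> (nat \<Rightarrow> nat \<Rightarrow> int) \<Rightarrow> nat \<Rightarrow> int" where
  "cc n alpha k = ctilde n alpha k div cgcd n alpha"

definition torus :: "nat \<Rightarrow> (nat \<Rightarrow> complex) set" where
  "torus n = {t. (\<forall>i<n. cmod (t i) = 1) \<and> (\<forall>i\<ge>n. t i = 1)}"

definition cspace :: "nat \<Rightarrow> (nat \<Rightarrow> complex) set" where
  "cspace n = {z. \<forall>i\<ge>n. z i = 0}"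

definition Tprime :: "nat \<Rightarrow> (nat \<Rightarrow> int) \<Rightarrow> (nat \<Rightarrow> complex) set" where
  "Tprime n c = {t \<in> torus n. (\<Prod>i<n. t i powi c i) = 1}"

definition stabilizer :: "nat \<Rightarrow> (nat \<Rightarrow> int) \<Rightarrow> (nat \<Rightarrow> complex) \<Rightarrow> (nat \<Rightarrow> complex) set" where
  "stabilizer n c z = {t \<in> Tprime n c. \<forall>i<n. t i * z i = z i}"

definition strictly_appropriate :: "nat \<Rightarrow> (nat \<Rightarrow> int) \<Rightarrow> bool" where
  "strictly_appropriate n c \<longleftrightarrow> (\<forall>z\<in>cspace n. connected (stabilizer n c z))"

end

theory Submission
  imports Defs "Jordan_Normal_Form.Determinant"
begin


lemma detn_nonzero:
  fixes M :: "nat \<Rightarrow> nat \<Rightarrow> int"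
  assumes indep: "\<forall>a::nat\<Rightarrow>int. (\<forall>r<m. (\<Sum>j<m. a j * M r j) = 0) \<longrightarrow> (\<forall>j<m. a j = 0)"
  shows "detn m M \<noteq> 0"
proof
  assume d0: "detn m M = 0"
  let ?A = "Matrix.mat m m (\<lambda>(i,j). M i j)"
  have car: "?A \<in> carrier_mat m m" by simp
  have "Determinant.det ?A = detn m M"
    unfolding Determinant.det_def detn_def
    by (auto simp: atLeast0LessThan permutes_in_image intro!: sum.cong prod.cong)
  with d0 have "Determinant.det ?A = 0" by simp
  then obtain v where v: "v \<in> carrier_vec m" "v \<noteq> 0\<^sub>v m" "?A *\<^sub>v v = 0\<^sub>v m"
    using Determinant.det_0_iff_vec_prod_zero[OF car] by blast
  have "\<forall>r<m. (\<Sum>j<m. vec_index v j * M r j) = 0"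
  proof (intro allI impI)
    fix r assume r: "r < m"
    have "vec_index (?A *\<^sub>v v) r = 0" using v(3) r by simp
    then show "(\<Sum>j<m. vec_index v j * M r j) = 0"
      using r v(1) by (simp add: scalar_prod_def row_def atLeast0LessThan mult.commute)
  qed
  with indep have "\<forall>j<m. vec_index v j = 0" by blast
  then have "v = 0\<^sub>v m" using v(1) by (intro eq_vecI) auto
  with v(2) show False by simp
qed

lemma skip_bij:
  assumes "k < n"
  shows "bij_betw (skip k) {..<n-1} ({..<n}-{k})"
  unfolding bij_betw_def
proof
  show "inj_on (skip k) {..<n - 1}" unfolding inj_on_def skip_def by auto
  show "skip k ` {..<n - 1} = {..<n} - {k}"
  proof
    show "skip k ` {..<n - 1} \<subseteq> {..<n} - {k}" using assms unfolding skip_def by auto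
    show "{..<n} - {k} \<subseteq> skip k ` {..<n - 1}"
    proof
      fix i assume i: "i \<in> {..<n} - {k}"
      show "i \<in> skip k ` {..<n - 1}"
      proof (cases "i < k")
        case True then show ?thesis using i assms unfolding skip_def
          by (intro image_eqI[of _ _ i]) auto
      next
        case False then show ?thesis using i assms unfolding skip_def
          by (intro image_eqI[of _ _ "i - 1"]) auto
      qed
    qed
  qed
qed

lemma ctilde_nonzero:
  assumes gp: "general_position n alpha" and k: "k < n"
  shows "ctilde n alpha k \<noteq> 0"
proof -
  have "detn (n-1) (\<lambda>r j. alpha (skip k j) r) \<noteq> 0"
  proof (rule detn_nonzero, intro allI impI)
    fix a :: "nat \<Rightarrow> int" and j
    assume h: "\<forall>r<n-1. (\<Sum>j<n-1. a j * alpha (skip k j) r) = 0" and j: "j < n - 1"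
    define b where "b i = a (if i < k then i else i - 1)" for i
    have bs: "b (skip k j) = a j" for j unfolding b_def skip_def by auto
    have "\<forall>r<n-1. (\<Sum>i\<in>{..<n}-{k}. b i * alpha i r) = 0"
    proof (intro allI impI)
      fix r assume r: "r < n - 1"
      have "(\<Sum>i\<in>{..<n}-{k}. b i * alpha i r) = (\<Sum>j<n-1. b (skip k j) * alpha (skip k j) r)"
        using sum.reindex_bij_betw[OF skip_bij[OF k], of "\<lambda>i. b i * alpha i r"] by simp
      also have "\<dots> = 0" using h r by (simp add: bs)
      finally show "(\<Sum>i\<in>{..<n}-{k}. b i * alpha i r) = 0" .
    qed
    with gp k have "\<forall>i\<in>{..<n}-{k}. b i = 0" unfolding general_position_def by blast
    moreover have "skip k j \<in> {..<n}-{k}" using skip_bij[OF k] j unfolding bij_betw_def by auto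
    ultimately show "a j = 0" using bs by metis
  qed
  then show ?thesis unfolding ctilde_def by simp
qed

lemma cc_nonzero:
  assumes gp: "general_position n alpha" and k: "k < n"
  shows "cc n alpha k \<noteq> 0"
proof
  assume c0: "cc n alpha k = 0"
  have "cgcd n alpha dvd ctilde n alpha k" unfolding cgcd_def using k by (intro Gcd_dvd) auto
  then obtain q where q: "ctilde n alpha k = cgcd n alpha * q" by (auto simp: dvd_def)
  have "cgcd n alpha \<noteq> 0" using q ctilde_nonzero[OF gp k] by auto
  then have "cc n alpha k = q" unfolding cc_def q by simp
  with q c0 ctilde_nonzero[OF gp k] show False by simp
qed



lemma exp_powi_pm1:
  assumes "c = 1 \<or> c = -1"
  shows "exp (x::complex) powi c = exp (of_int c * x)"
  using assms by (auto simp: exp_minus)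

lemma prod_exp_powi:
  assumes "\<forall>i\<in>A. c i = 1 \<or> c i = -1" "finite A"
  shows "(\<Prod>i\<in>A. exp (\<i> * of_real (f i)) powi c i) = exp (\<i> * of_real (\<Sum>i\<in>A. of_int (c i) * f i))"
proof -
  have "(\<Prod>i\<in>A. exp (\<i> * of_real (f i)) powi c i) = (\<Prod>i\<in>A. exp (of_int (c i) * (\<i> * of_real (f i))))"
    using assms(1) by (intro prod.cong) (auto simp: exp_powi_pm1)
  also have "\<dots> = exp (\<Sum>i\<in>A. of_int (c i) * (\<i> * of_real (f i)))"
    using assms(2) by (simp add: exp_sum)
  also have "(\<Sum>i\<in>A. of_int (c i) * (\<i> * of_real (f i))) = \<i> * of_real (\<Sum>i\<in>A. of_int (c i) * f i)"
    by (simp add: sum_distrib_left algebra_simps)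
  finally show ?thesis .
qed

lemma unit_exp_Arg:
  assumes "cmod w = 1"
  shows "exp (\<i> * of_real (Arg w)) = w"
proof -
  have "w \<noteq> 0" using assms by auto
  then have "cis (Arg w) = sgn w" by (rule cis_Arg)
  then show ?thesis using assms by (simp add: cis_conv_exp sgn_div_norm)
qed

lemma conn_pm1:
  assumes pm: "\<forall>k<n. c k = 1 \<or> c k = -1" and z: "z \<in> cspace n"
  shows "connected (stabilizer n c z)"
proof (cases "\<exists>j<n. z j = 0")
  case False
  have "stabilizer n c z \<subseteq> {\<lambda>i. 1}"
  proof
    fix t assume t: "t \<in> stabilizer n c z"
    have "t i = 1" for i
    proof (cases "i < n")
      case True
      with False have "z i \<noteq> 0" by auto
      with t True show ?thesis unfolding stabilizer_def by auto
    next
      case False with t show ?thesis unfolding stabilizer_def Tprime_def torus_def by auto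
    qed
    then show "t \<in> {\<lambda>i. 1}" by auto
  qed
  then have "stabilizer n c z = {} \<or> stabilizer n c z = {\<lambda>i. 1}" by blast
  then show ?thesis by auto
next
  case True
  then obtain j where j: "j < n" "z j = 0" by blast
  have cj: "c j = 1 \<or> c j = -1" using pm j by auto
  define ph where "ph t i = (if i < n \<and> i \<noteq> j \<and> z i = 0 then Arg (t i) else 0)" for t :: "nat \<Rightarrow> complex" and i
  define Sg where "Sg t = (\<Sum>l\<in>{..<n}-{j}. of_int (c l) * ph t l)" for t
  define th where "th t i = (if i = j then - of_int (c j) * Sg t else ph t i)" for t i
  define G where "G t s = (\<lambda>i. exp (\<i> * of_real (s * th t i)))" for t s
  have sumth: "(\<Sum>i<n. of_int (c i) * (s * th t i)) = 0" for t s
  proof -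
    have "(\<Sum>i<n. of_int (c i) * (s * th t i)) = s * (\<Sum>i<n. of_int (c i) * th t i)"
      by (simp add: sum_distrib_left algebra_simps)
    also have "(\<Sum>i<n. of_int (c i) * th t i) = of_int (c j) * th t j + (\<Sum>i\<in>{..<n}-{j}. of_int (c i) * th t i)"
      using j by (simp add: sum.remove)
    also have "(\<Sum>i\<in>{..<n}-{j}. of_int (c i) * th t i) = Sg t"
      unfolding Sg_def th_def by (intro sum.cong) auto
    also have "of_int (c j) * th t j = - (of_int (c j) * of_int (c j)) * Sg t" unfolding th_def by simp
    also have "of_int (c j) * of_int (c j) = (1::real)" using cj by auto
    finally show ?thesis by simp
  qed
  have Gin: "G t s \<in> stabilizer n c z" for t s
  proof -
    have thn: "th t i = 0" if "i \<ge> n \<or> z i \<noteq> 0" for i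
      using that j unfolding th_def ph_def by auto
    have "(\<Prod>i<n. G t s i powi c i) = exp (\<i> * of_real (\<Sum>i<n. of_int (c i) * (s * th t i)))"
      unfolding G_def using pm by (intro prod_exp_powi) auto
    also have "\<dots> = 1" by (simp add: sumth)
    finally have "(\<Prod>i<n. G t s i powi c i) = 1" .
    moreover have "G t s \<in> torus n" unfolding torus_def G_def using thn by auto
    moreover have "\<forall>i<n. G t s i * z i = z i"
    proof (intro allI impI)
      fix i assume "i < n"
      show "G t s i * z i = z i" unfolding G_def using thn[of i] by (cases "z i = 0") auto
    qed
    ultimately show ?thesis unfolding stabilizer_def Tprime_def by auto
  qed
  have G0: "G t 0 = (\<lambda>i. 1)" for t unfolding G_def by simp
  have G1: "G t 1 = t" if t: "t \<in> stabilizer n c z" for t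
  proof -
    have tt: "t \<in> torus n" and tp: "(\<Prod>i<n. t i powi c i) = 1" and tz: "\<forall>i<n. t i * z i = z i"
      using t unfolding stabilizer_def Tprime_def by auto
    have oth: "t i = exp (\<i> * of_real (ph t i))" if "i \<noteq> j" for i
    proof (cases "i < n")
      case True
      then have "cmod (t i) = 1" using tt unfolding torus_def by auto
      show ?thesis
      proof (cases "z i = 0")
        case True then show ?thesis using \<open>i < n\<close> \<open>i \<noteq> j\<close> \<open>cmod (t i) = 1\<close> unfolding ph_def
          by (simp add: unit_exp_Arg)
      next
        case False then have "t i = 1" using tz \<open>i < n\<close> by auto
        then show ?thesis using False unfolding ph_def by simp
      qed
    next
      case False then show ?thesis using tt unfolding torus_def ph_def by auto
    qed
    have "(\<Prod>i<n. t i powi c i) = t j powi c j * (\<Prod>i\<in>{..<n}-{j}. t i powi c i)"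
      using j by (simp add: prod.remove)
    also have "(\<Prod>i\<in>{..<n}-{j}. t i powi c i) = (\<Prod>i\<in>{..<n}-{j}. exp (\<i> * of_real (ph t i)) powi c i)"
      using oth by (intro prod.cong) auto
    also have "\<dots> = exp (\<i> * of_real (Sg t))" unfolding Sg_def using pm by (intro prod_exp_powi) auto
    finally have "t j powi c j * exp (\<i> * of_real (Sg t)) = 1" using tp by simp
    then have pj: "t j powi c j = exp (- (\<i> * of_real (Sg t)))"
      by (simp add: exp_minus field_simps)
    have tj: "t j = exp (\<i> * of_real (th t j))"
      using cj
    proof (elim disjE)
      assume "c j = 1"
      then show ?thesis using pj unfolding th_def by simp
    next
      assume "c j = -1"
      then have "inverse (t j) = inverse (exp (\<i> * complex_of_real (Sg t)))" using pj by (simp add: exp_minus)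
      then show ?thesis using \<open>c j = -1\<close> unfolding th_def by simp
    qed
    show ?thesis
    proof
      fix i show "G t 1 i = t i"
        using tj oth[of i] unfolding G_def th_def by (cases "i = j") auto
    qed
  qed
  have pth: "path (G t)" for t
    unfolding path_def G_def
    by (intro continuous_on_coordinatewise_then_product continuous_intros)
  let ?F = "(\<lambda>t. path_image (G t)) ` stabilizer n c z"
  have eq: "stabilizer n c z = \<Union> ?F"
  proof
    show "stabilizer n c z \<subseteq> \<Union> ?F"
    proof
      fix t assume t: "t \<in> stabilizer n c z"
      have "t \<in> path_image (G t)" using G1[OF t] pathfinish_in_path_image[of "G t"]
        unfolding pathfinish_def by simp
      with t show "t \<in> \<Union> ?F" by blast
    qed
    show "\<Union> ?F \<subseteq> stabilizer n c z" using Gin unfolding path_image_def by auto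
  qed
  have "(\<lambda>i. 1) \<in> \<Inter> ?F"
  proof (rule INT_I)
    fix t assume "t \<in> stabilizer n c z"
    show "(\<lambda>i. 1::complex) \<in> path_image (G t)" using pathstart_in_path_image[of "G t"] G0[of t]
      unfolding pathstart_def by simp
  qed
  then have "\<Inter> ?F \<noteq> {}" by blast
  moreover have "\<And>X. X \<in> ?F \<Longrightarrow> connected X" using pth connected_path_image by blast
  ultimately have "connected (\<Union> ?F)" by (rule connected_Union[rotated])
  then show ?thesis using eq by simp
qed



lemma disconn:
  assumes k: "k < n" and c0: "c k \<noteq> 0" and c1: "c k \<noteq> 1" and c2: "c k \<noteq> -1"
  shows "\<not> strictly_appropriate n c"
proof
  assume sa: "strictly_appropriate n c"
  define m where "m = nat \<bar>c k\<bar>"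
  have m2: "m \<ge> 2" using c0 c1 c2 unfolding m_def by auto
  define z where "z i = (if i < n \<and> i \<noteq> k then 1 else (0::complex))" for i
  have zc: "z \<in> cspace n" unfolding cspace_def z_def by auto
  define X where "X = stabilizer n c z"
  have conX: "connected X" using sa zc unfolding strictly_appropriate_def X_def by auto
  define emb where "emb w = (\<lambda>i. if i = k then w else (1::complex))" for w
  have powi_m: "w powi c k = 1 \<longleftrightarrow> w ^ m = 1" for w :: complex
    unfolding m_def power_int_def using c0
    by (cases "c k \<ge> 0") (auto simp: power_inverse nat_abs_int_diff)
  have prodemb: "(\<Prod>i<n. emb w i powi c i) = w powi c k" for w
  proof -
    have "(\<Prod>i<n. emb w i powi c i) = emb w k powi c k * (\<Prod>i\<in>{..<n}-{k}. emb w i powi c i)"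
      using k by (simp add: prod.remove)
    also have "(\<Prod>i\<in>{..<n}-{k}. emb w i powi c i) = 1" by (intro prod.neutral) (auto simp: emb_def)
    finally show ?thesis by (simp add: emb_def)
  qed
  have embX: "emb w \<in> X" if "cmod w = 1" "w ^ m = 1" for w
  proof -
    have "emb w \<in> torus n" unfolding torus_def emb_def using that k by auto
    moreover have "(\<Prod>i<n. emb w i powi c i) = 1" using prodemb powi_m that by simp
    moreover have "\<forall>i<n. emb w i * z i = z i" unfolding emb_def z_def by auto
    ultimately show ?thesis unfolding X_def stabilizer_def Tprime_def by auto
  qed
  let ?f = "\<lambda>l. cis (2 * pi * real l / real m)"
  have bij: "bij_betw ?f {..<m} {w::complex. w ^ m = 1}" using Complex.bij_betw_roots_unity[of m] m2 by simp
  have rootsfin: "finite {w::complex. w ^ m = 1}"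
    using bij_betw_finite[OF bij] by simp
  have "X \<subseteq> emb ` {w. w ^ m = 1}"
  proof
    fix t assume t: "t \<in> X"
    have tt: "t \<in> torus n" and tp: "(\<Prod>i<n. t i powi c i) = 1" and tz: "\<forall>i<n. t i * z i = z i"
      using t unfolding X_def stabilizer_def Tprime_def by auto
    have "t i = 1" if "i \<noteq> k" for i
    proof (cases "i < n")
      case True then show ?thesis using tz that unfolding z_def by auto
    next
      case False then show ?thesis using tt unfolding torus_def by auto
    qed
    then have te: "t = emb (t k)" unfolding emb_def by auto
    then have "t k powi c k = 1" using tp prodemb[of "t k"] by simp
    then have "t k ^ m = 1" using powi_m by simp
    then show "t \<in> emb ` {w. w ^ m = 1}" using te by blast
  qed
  then have finX: "finite X" using rootsfin finite_subset by blast
  have inj: "inj_on ?f {..<m}" using bij unfolding bij_betw_def by auto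
  have "?f 0 \<noteq> ?f 1"
  proof
    assume eq: "?f 0 = ?f 1"
    have "(0::nat) = 1" using inj_onD[OF inj eq] m2 by simp
    then show False by simp
  qed
  then have w1: "?f 1 \<noteq> 1" by simp
  have "(1::nat) \<in> {..<m}" using m2 by auto
  then have "?f 1 \<in> ?f ` {..<m}" by (rule imageI)
  then have "?f 1 \<in> {w. w ^ m = 1}" using bij_betw_imp_surj_on[OF bij] by simp
  then have w1r: "?f 1 ^ m = 1" by simp
  have "emb 1 \<in> X" using embX by simp
  moreover have "emb (?f 1) \<in> X" using embX w1r by simp
  moreover have "emb 1 \<noteq> emb (?f 1)"
  proof
    assume "emb 1 = emb (?f 1)"
    then have "emb 1 k = emb (?f 1) k" by simp
    with w1 show False unfolding emb_def by simp
  qed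
  moreover have "X = {} \<or> (\<exists>a. X = {a})" using connected_finite_iff_sing[OF conX] finX by blast
  ultimately show False by blast
qed


theorem lemma4p3:
  fixes n :: nat and alpha :: "nat \<Rightarrow> nat \<Rightarrow> int"
  assumes "general_position n alpha"
  shows "strictly_appropriate n (cc n alpha) \<longleftrightarrow> (\<forall>k<n. cc n alpha k = 1 \<or> cc n alpha k = -1)"
proof
  assume sa: "strictly_appropriate n (cc n alpha)"
  show "\<forall>k<n. cc n alpha k = 1 \<or> cc n alpha k = -1"
  proof (intro allI impI)
    fix k assume k: "k < n"
    show "cc n alpha k = 1 \<or> cc n alpha k = -1"
      using disconn[of k n "cc n alpha", OF k cc_nonzero[OF assms k]] sa by blast
  qed
next
  assume "\<forall>k<n. cc n alpha k = 1 \<or> cc n alpha k = -1"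
  then show "strictly_appropriate n (cc n alpha)"
    unfolding strictly_appropriate_def using conn_pm1 by blast
qed

end
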